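(* Let $Y_1,\dots,Y_k$ be real numbers and let $M=\max\{0,\max_{1\le j\le k}(Y_1+\cdots+Y_j)\}$ be the maximum of the walk with steps $Y_1,\dots,Y_k$. Let $i\in\{1,\dots,k\}$ and $c\ge1$, and let $M'$ be the maximum of the walk with steps $Y_1,\dots,Y_i,cY_{i+1},\dots,cY_k$, defined in the same way. Then $M\le M'$. *)

theory Defs
  imports Main Complex_Main
begin

definition walk_max :: "(nat \<Rightarrow> real) \<Rightarrow> nat \<Rightarrow> real" where
  "walk_max Y k = Max (insert 0 {(\<Sum>l=1..j. Y l) | j. 1 \<le> j \<and> j \<le> k})"

end

theory Submission
  imports Defs
begin

lemma fin_walk: "finite {(\<Sum>l=1..j. Y l) | j. 1 \<le> j \<and> j \<le> (k::nat)}"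
proof -
  have "{(\<Sum>l=1..j. Y l) | j. 1 \<le> j \<and> j \<le> k} = (\<lambda>j. \<Sum>l=1..j. Y l) ` {1..k}" by auto
  thus ?thesis by simp
qed

lemma le_walk_max: "1 \<le> j \<Longrightarrow> j \<le> k \<Longrightarrow> (\<Sum>l=1..j. Y l) \<le> walk_max Y k"
  unfolding walk_max_def by (rule Max_ge) (use fin_walk in auto)

lemma split_sum: "i \<le> j \<Longrightarrow> (\<Sum>l=1..j. (f::nat\<Rightarrow>real) l) = (\<Sum>l=1..i. f l) + (\<Sum>l=Suc i..j. f l)"
proof -
  assume "i \<le> j"
  then obtain p where "j = i + p" using le_Suc_ex by blast
  thus ?thesis using sum.ub_add_nat[of 1 i f p] by simp
qed

theorem lemmaC1:
  fixes Y :: "nat \<Rightarrow> real" and k i :: nat and c :: real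
  assumes "1 \<le> i" and "i \<le> k" and "c \<ge> 1"
  shows "walk_max Y k \<le> walk_max (\<lambda>l. if l \<le> i then Y l else c * Y l) k"
proof -
  define Z where "Z = (\<lambda>l. if l \<le> i then Y l else c * Y l)"
  have Zi: "(\<Sum>l=1..j. Z l) = (\<Sum>l=1..j. Y l)" if "j \<le> i" for j
    using that by (intro sum.cong) (auto simp: Z_def)
  have Zj: "(\<Sum>l=1..j. Z l) = (\<Sum>l=1..i. Y l) + c * (\<Sum>l=Suc i..j. Y l)" if "i \<le> j" for j
  proof -
    have "(\<Sum>l=1..j. Z l) = (\<Sum>l=1..i. Z l) + (\<Sum>l=Suc i..j. Z l)" using split_sum that by blast
    also have "(\<Sum>l=Suc i..j. Z l) = (\<Sum>l=Suc i..j. c * Y l)" by (intro sum.cong) (auto simp: Z_def)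
    finally show ?thesis using Zi[of i] by (simp add: sum_distrib_left)
  qed
  have 0: "0 \<le> walk_max Z k" unfolding walk_max_def by (rule Max_ge) (use fin_walk in auto)
  have "(\<Sum>l=1..j. Y l) \<le> walk_max Z k" if "1 \<le> j" "j \<le> k" for j
  proof (cases "j \<le> i")
    case True then show ?thesis using Zi[of j] le_walk_max[OF that, of Z] by simp
  next
    case False
    hence ij: "i \<le> j" by simp
    have sp: "(\<Sum>l=1..j. Y l) = (\<Sum>l=1..i. Y l) + (\<Sum>l=Suc i..j. Y l)" using split_sum[OF ij] .
    have A: "(\<Sum>l=1..i. Y l) \<le> walk_max Z k" using Zi[of i] le_walk_max[OF assms(1) assms(2), of Z] by simp
    have B: "(\<Sum>l=1..i. Y l) + c * (\<Sum>l=Suc i..j. Y l) \<le> walk_max Z k" using Zj[OF ij] le_walk_max[OF that, of Z] by simp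
    show ?thesis
    proof (cases "(\<Sum>l=Suc i..j. Y l) \<ge> 0")
      case True
      hence "(\<Sum>l=Suc i..j. Y l) \<le> c * (\<Sum>l=Suc i..j. Y l)" using assms(3)
        using mult_right_mono[of 1 c "(\<Sum>l=Suc i..j. Y l)"] by simp
      then show ?thesis using sp B by linarith
    next
      case False then show ?thesis using sp A by linarith
    qed
  qed
  hence "\<forall>a\<in>insert 0 {(\<Sum>l=1..j. Y l) | j. 1 \<le> j \<and> j \<le> k}. a \<le> walk_max Z k"
    using 0 by blast
  hence "walk_max Y k \<le> walk_max Z k" unfolding walk_max_def[of Y]
    using fin_walk[of Y k] by (simp only: Max_le_iff finite_insert insert_not_empty simp_thms)
  thus ?thesis unfolding Z_def .
qed

end
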